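(* Fix $1<p,q<\infty$ with $\frac1p+\frac1q=1$, an integer $r>1$, and put $s=r^{1/p}$. Then for every $x\in\mathcal N_s^{(p)}$ we have $\|x\|_p^p\le |x|_{p,r}$.
   Context: For $\alpha>0$ let $C_\alpha=\{\pm\alpha^j: j\in\mathbb Z\}\cup\{0\}$, $\mathcal N_\alpha=\{x\in c_{00}: x(i)\in C_\alpha \text{ for all } i\}$ ($c_{00}$ = finitely supported real sequences), and $\mathcal N_\alpha^{(p)}=\mathcal N_\alpha\cap B_{\ell_p}$. Let $K^{\mathcal M}_{q,r}$ be the smallest subset of $c_{00}$ containing all $\pm e_n$ and such that whenever $y_1,\dots,y_l\in K^{\mathcal M}_{q,r}$, $l\le r$, have pairwise disjoint supports, then $r^{-1/q}(y_1+\dots+y_l)\in K^{\mathcal M}_{q,r}$. Define $|x|_{p,r}=\sup\{\sum_i x(i)y(i): y\in K^{\mathcal M}_{q,r}\}$. *)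

theory Defs
  imports Complex_Main
begin

definition supp :: "(nat \<Rightarrow> real) \<Rightarrow> nat set" where
  "supp x = {i. x i \<noteq> 0}"

definition c00 :: "(nat \<Rightarrow> real) set" where
  "c00 = {x. finite (supp x)}"

definition C_set :: "real \<Rightarrow> real set" where
  "C_set \<alpha> = {t. t = 0 \<or> (\<exists>j::int. t = \<alpha> powi j \<or> t = - (\<alpha> powi j))}"

definition N_set :: "real \<Rightarrow> (nat \<Rightarrow> real) set" where
  "N_set \<alpha> = {x \<in> c00. \<forall>i. x i \<in> C_set \<alpha>}"

definition lp_pow :: "real \<Rightarrow> (nat \<Rightarrow> real) \<Rightarrow> real" where
  "lp_pow p x = (\<Sum>i\<in>supp x. \<bar>x i\<bar> powr p)"

definition lp_ball :: "real \<Rightarrow> (nat \<Rightarrow> real) set" where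
  "lp_ball p = {x \<in> c00. lp_pow p x \<le> 1}"

definition N_p :: "real \<Rightarrow> real \<Rightarrow> (nat \<Rightarrow> real) set" where
  "N_p \<alpha> p = N_set \<alpha> \<inter> lp_ball p"

definition unit_vec :: "nat \<Rightarrow> nat \<Rightarrow> real" where
  "unit_vec n = (\<lambda>i. if i = n then 1 else 0)"

inductive_set K_M :: "real \<Rightarrow> nat \<Rightarrow> (nat \<Rightarrow> real) set" for q :: real and r :: nat where
  unit_pos: "unit_vec n \<in> K_M q r"
| unit_neg: "(\<lambda>i. - unit_vec n i) \<in> K_M q r"
| comb: "\<lbrakk> 1 \<le> length ys; length ys \<le> r; \<forall>y\<in>set ys. y \<in> K_M q r;
          \<forall>a<length ys. \<forall>b<length ys. a \<noteq> b \<longrightarrow> (\<forall>i. (ys ! a) i = 0 \<or> (ys ! b) i = 0) \<rbrakk>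
         \<Longrightarrow> (\<lambda>i. real r powr (- 1 / q) * (\<Sum>y\<leftarrow>ys. y i)) \<in> K_M q r"

text \<open>The norm |x|_{p,r}, where q is the conjugate exponent of p (passed explicitly).\<close>
definition pr_norm :: "real \<Rightarrow> nat \<Rightarrow> (nat \<Rightarrow> real) \<Rightarrow> real" where
  "pr_norm q r x = Sup {(\<Sum>i\<in>supp x. x i * y i) | y. y \<in> K_M q r}"

end

theory Submission
  imports Defs "HOL-Library.Multiset"
begin

definition ip :: "(nat \<Rightarrow> real) \<Rightarrow> (nat \<Rightarrow> real) \<Rightarrow> real" where
  "ip x v = (\<Sum>i\<in>supp x. x i * v i)"

lemma ip_lin: "ip x (\<lambda>i. c * (\<Sum>y\<leftarrow>ys. y i)) = c * (\<Sum>y\<leftarrow>ys. ip x y)"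
proof -
  have "(\<Sum>i\<in>supp x. x i * (\<Sum>y\<leftarrow>ys. y i)) = (\<Sum>y\<leftarrow>ys. ip x y)"
    by (induction ys) (simp_all add: ip_def sum.distrib algebra_simps)
  have "ip x (\<lambda>i. c * (\<Sum>y\<leftarrow>ys. y i)) = (\<Sum>i\<in>supp x. c * (x i * (\<Sum>y\<leftarrow>ys. y i)))"
    unfolding ip_def by (simp add: algebra_simps)
  also have "\<dots> = c * (\<Sum>i\<in>supp x. x i * (\<Sum>y\<leftarrow>ys. y i))"
    by (simp add: sum_distrib_left)
  finally show ?thesis using \<open>_ = (\<Sum>y\<leftarrow>ys. ip x y)\<close> by simp
qed

lemma sum_list_split:
  assumes "mset A = mset B + mset C"
  shows "sum_list (map f A) = sum_list (map f B) + (sum_list (map f C) :: real)"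
proof -
  have "sum_list (map f A) = sum_mset (image_mset f (mset A))"
    by (metis mset_map sum_mset_sum_list)
  moreover have "sum_list (map f B) = sum_mset (image_mset f (mset B))"
    by (metis mset_map sum_mset_sum_list)
  moreover have "sum_list (map f C) = sum_mset (image_mset f (mset C))"
    by (metis mset_map sum_mset_sum_list)
  ultimately show ?thesis using assms by simp
qed

lemma sum_list_const_on:
  assumes "\<forall>p\<in>set xs. f p = (c::real)"
  shows "sum_list (map f xs) = real (length xs) * c"
proof -
  have "map f xs = map (\<lambda>_. c) xs" by (rule map_cong) (use assms in auto)
  then show ?thesis by (metis sum_list_triv)
qed

lemma two_le_filter:
  assumes "a < length xs" "b < length xs" "a \<noteq> b" "P (xs ! a)" "P (xs ! b)"
  shows "2 \<le> length (filter P xs)"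
proof -
  have "{a, b} \<subseteq> {i. i < length xs \<and> P (xs ! i)}" using assms by auto
  then have "card {a, b} \<le> card {i. i < length xs \<and> P (xs ! i)}"
    by (rule card_mono[rotated]) auto
  then show ?thesis using assms(3) by (simp add: length_filter_conv_card)
qed

lemma sum_disj_bound:
  "(\<forall>a<length zs. \<forall>b<length zs. a \<noteq> b \<longrightarrow> (zs ! a) i = 0 \<or> (zs ! b) i = 0)
     \<Longrightarrow> (\<forall>z\<in>set zs. \<bar>z i\<bar> \<le> (1::real)) \<Longrightarrow> \<bar>\<Sum>z\<leftarrow>zs. z i\<bar> \<le> 1"
proof (induction zs)
  case Nil
  then show ?case by simp
next
  case (Cons z zs)
  have d: "\<forall>a<length zs. \<forall>b<length zs. a \<noteq> b \<longrightarrow> (zs ! a) i = 0 \<or> (zs ! b) i = 0"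
  proof (intro allI impI)
    fix a b assume "a < length zs" "b < length zs" "a \<noteq> b"
    then show "(zs ! a) i = 0 \<or> (zs ! b) i = 0"
      using Cons.prems(1)[rule_format, of "Suc a" "Suc b"] by simp
  qed
  show ?case
  proof (cases "z i = 0")
    case True
    then show ?thesis using Cons d by simp
  next
    case False
    have "\<forall>w\<in>set zs. w i = 0"
    proof
      fix w assume "w \<in> set zs"
      then obtain b where "b < length zs" "zs ! b = w" by (auto simp: in_set_conv_nth)
      then show "w i = 0"
        using Cons.prems(1)[rule_format, of 0 "Suc b"] False by auto
    qed
    then have "(\<Sum>w\<leftarrow>zs. w i) = 0" by (induction zs) auto
    then show ?thesis using Cons.prems(2) by simp
  qed
qed

lemma K_bound:
  assumes "y \<in> K_M q r" "q > 0"
  shows "\<bar>y i\<bar> \<le> 1"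
  using assms(1)
proof (induction arbitrary: i)
  case (unit_pos n)
  then show ?case by (simp add: unit_vec_def)
next
  case (unit_neg n)
  then show ?case by (simp add: unit_vec_def)
next
  case (comb ys)
  have s: "\<bar>\<Sum>z\<leftarrow>ys. z i\<bar> \<le> 1"
    by (rule sum_disj_bound) (use comb in auto)
  have r1: "real r \<ge> 1" using comb(1,2) by simp
  have "real r powr (- 1 / q) \<le> 1"
    using powr_mono[of "- 1 / q" 0 "real r"] r1 \<open>q > 0\<close> by simp
  moreover have "real r powr (- 1 / q) \<ge> 0" by simp
  ultimately show ?case using s
    by (simp add: abs_mult mult_le_one)
qed

lemma kraft_step:
  fixes \<rho> P R :: real and N :: nat
  assumes "\<rho> > 1" "P = \<rho> ^ k" "inverse (\<rho> * P) + R \<le> 1" "R * P = real N"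
    "\<rho> ^ k = real (rr ^ k)"
  shows "inverse P + R \<le> 1"
proof -
  have P0: "P > 0" using assms(1,2) by simp
  have "(inverse (\<rho> * P) + R) * P \<le> P" using assms(3) P0 by (simp add: mult_le_cancel_right1)
  moreover have "(inverse (\<rho> * P) + R) * P = inverse (\<rho> * P) * P + R * P" by (rule distrib_right)
  moreover have "inverse (\<rho> * P) * P = inverse \<rho>" using P0 assms(1) by (simp add: field_simps)
  ultimately have "inverse \<rho> + real N \<le> P" using assms(4) by linarith
  moreover have "inverse \<rho> > 0" using assms(1) by simp
  ultimately have "real N < P" by linarith
  then have "real N < real (rr ^ k)" using assms(2,5) by metis
  then have "N < rr ^ k" by (simp only: of_nat_less_iff)
  then have "N + 1 \<le> rr ^ k" by linarith
  then have "real N + 1 \<le> P" using assms(2,5) by (metis of_nat_1 of_nat_add of_nat_le_iff)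
  then have "R * P + 1 \<le> P" using assms(4) by simp
  then have "(R + inverse P) * P \<le> 1 * P" using P0 by (simp add: algebra_simps)
  then show ?thesis using P0 by (simp add: mult_le_cancel_right add.commute)
qed

lemma merge:
  fixes q :: real and r :: nat and x :: "nat \<Rightarrow> real"
  assumes r2: "r \<ge> 2" and q0: "q > 0"
  shows "\<And>L. sum_list (map snd L) = n \<Longrightarrow> L \<noteq> [] \<Longrightarrow> (\<forall>p\<in>set L. fst p \<in> K_M q r)
    \<Longrightarrow> (\<forall>i. size (filter_mset (\<lambda>p. fst p i \<noteq> 0) (mset L)) \<le> 1)
    \<Longrightarrow> (\<Sum>p\<leftarrow>L. inverse (real r ^ snd p)) \<le> 1
    \<Longrightarrow> \<exists>w\<in>K_M q r. ip x w = (\<Sum>p\<leftarrow>L. real r powr (- real (snd p) / q) * ip x (fst p))"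
proof (induction n rule: less_induct)
  case (less n L)
  define \<rho> where "\<rho> = real r"
  have \<rho>1: "\<rho> > 1" using r2 by (simp add: \<rho>_def)
  define m where "m = Max (snd ` set L)"
  have fin: "finite (snd ` set L)" by simp
  have mle: "\<forall>p\<in>set L. snd p \<le> m" unfolding m_def using fin by auto
  have "m \<in> snd ` set L" unfolding m_def using Max_in[OF fin] less.prems(2) by auto
  then obtain p0 where p0: "p0 \<in> set L" "snd p0 = m" by auto
  show ?case
  proof (cases "m = 0")
    case True
    then have z: "\<forall>p\<in>set L. snd p = 0" using mle by auto
    have "(\<Sum>p\<leftarrow>L. inverse (real r ^ snd p)) = real (length L) * 1"
      by (rule sum_list_const_on) (use z in simp)
    then have "length L \<le> 1" using less.prems(5) by simp
    then obtain p where L: "L = [p]" using less.prems(2)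
      by (cases L) auto
    show ?thesis using L less.prems(3) z r2 by auto
  next
    case False
    define ds where "ds = filter (\<lambda>p. snd p = m) L"
    define rs where "rs = filter (\<lambda>p. snd p \<noteq> m) L"
    define cs where "cs = take r ds"
    define es where "es = drop r ds"
    define v' where "v' = (\<lambda>i. real r powr (- 1 / q) * (\<Sum>y\<leftarrow>map fst cs. y i))"
    define L' where "L' = (v', m - 1) # es @ rs"
    have ds_ne: "ds \<noteq> []" unfolding ds_def using p0 by (auto simp: filter_empty_conv)
    have cs_ne: "cs \<noteq> []" unfolding cs_def using ds_ne r2 by simp
    have cs_len: "length cs \<le> r" unfolding cs_def by simp
    have ds_m: "\<forall>p\<in>set ds. snd p = m" unfolding ds_def by simp
    have cs_m: "\<forall>p\<in>set cs. snd p = m" unfolding cs_def using ds_m by (meson in_set_takeD)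
    have es_m: "\<forall>p\<in>set es. snd p = m" unfolding es_def using ds_m by (meson in_set_dropD)
    have rs_m: "\<forall>p\<in>set rs. snd p < m" unfolding rs_def using mle by fastforce
    have csL: "set cs \<subseteq> set L" unfolding cs_def ds_def using set_take_subset by fastforce
    have esL: "set es \<subseteq> set L" unfolding es_def ds_def using set_drop_subset by fastforce
    have rsL: "set rs \<subseteq> set L" unfolding rs_def by auto
    have msL: "mset L = mset cs + (mset es + mset rs)"
    proof -
      have "mset L = mset ds + mset rs" unfolding ds_def rs_def
        by (simp add: multiset_partition)
      moreover have "mset ds = mset cs + mset es" unfolding cs_def es_def
        by (metis append_take_drop_id mset_append)
      ultimately show ?thesis by simp
    qed
    have msL2: "mset L = mset cs + mset (es @ rs)" using msL by simp
    have msL': "mset L' = mset [(v', m - 1)] + mset (es @ rs)" unfolding L'_def by simp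
    have split: "\<And>f. sum_list (map f L) = sum_list (map f cs) + (sum_list (map f (es @ rs)) :: real)"
      by (rule sum_list_split[OF msL2])
    have split': "\<And>f. sum_list (map f L') = f (v', m - 1) + (sum_list (map f (es @ rs)) :: real)"
      unfolding L'_def by simp
    have cnt: "\<And>i. size (filter_mset (\<lambda>p. fst p i \<noteq> 0) (mset cs))
        + size (filter_mset (\<lambda>p. fst p i \<noteq> 0) (mset (es @ rs))) \<le> 1"
      using less.prems(4) msL2 by (metis filter_union_mset size_union)
    have v'K: "v' \<in> K_M q r"
      unfolding v'_def
    proof (rule K_M.comb)
      show "1 \<le> length (map fst cs)" using cs_ne by (simp add: Suc_le_eq)
      show "length (map fst cs) \<le> r" using cs_len by simp
      show "\<forall>y\<in>set (map fst cs). y \<in> K_M q r" using less.prems(3) csL by auto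
      show "\<forall>a<length (map fst cs). \<forall>b<length (map fst cs). a \<noteq> b \<longrightarrow>
          (\<forall>i. (map fst cs ! a) i = 0 \<or> (map fst cs ! b) i = 0)"
      proof (intro allI impI)
        fix a b i assume ab: "a < length (map fst cs)" "b < length (map fst cs)" "a \<noteq> b"
        show "(map fst cs ! a) i = 0 \<or> (map fst cs ! b) i = 0"
        proof (rule ccontr)
          assume "\<not> ?thesis"
          then have "2 \<le> length (filter (\<lambda>p. fst p i \<noteq> 0) cs)"
            using ab by (intro two_le_filter[of a cs b]) auto
          moreover have "length (filter (\<lambda>p. fst p i \<noteq> 0) cs) = size (filter_mset (\<lambda>p. fst p i \<noteq> 0) (mset cs))"
            by (metis mset_filter size_mset)
          ultimately show False using cnt[of i] by linarith
        qed
      qed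
    qed
    have disj': "\<forall>i. size (filter_mset (\<lambda>p. fst p i \<noteq> 0) (mset L')) \<le> 1"
    proof
      fix i
      show "size (filter_mset (\<lambda>p. fst p i \<noteq> 0) (mset L')) \<le> 1"
      proof (cases "v' i = 0")
        case True
        then show ?thesis using cnt[of i] unfolding L'_def by simp
      next
        case False
        then have "(\<Sum>y\<leftarrow>map fst cs. y i) \<noteq> 0" unfolding v'_def by auto
        then obtain p where p: "p \<in> set cs" "fst p i \<noteq> 0"
        proof -
          assume h: "\<And>p. p \<in> set cs \<Longrightarrow> fst p i \<noteq> 0 \<Longrightarrow> thesis"
          have "\<not> (\<forall>p\<in>set cs. fst p i = 0) \<or> (\<Sum>y\<leftarrow>map fst cs. y i) = 0"
            by (induction cs) auto
          then show thesis using h \<open>(\<Sum>y\<leftarrow>map fst cs. y i) \<noteq> 0\<close> by blast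
        qed
        then have pin: "p \<in># filter_mset (\<lambda>p. fst p i \<noteq> 0) (mset cs)" by simp
        have ne: "filter_mset (\<lambda>p. fst p i \<noteq> 0) (mset cs) \<noteq> {#}" using pin by force
        have "1 \<le> size (filter_mset (\<lambda>p. fst p i \<noteq> 0) (mset cs))"
          by (metis One_nat_def Suc_leI neq0_conv size_eq_0_iff_empty ne)
        then have z: "size (filter_mset (\<lambda>p. fst p i \<noteq> 0) (mset (es @ rs))) = 0"
          using cnt[of i] by linarith
        have eq: "size (filter_mset (\<lambda>p. fst p i \<noteq> 0) (mset L')) =
            size (filter_mset (\<lambda>p. fst p i \<noteq> 0) (mset [(v', m - 1)]))
            + size (filter_mset (\<lambda>p. fst p i \<noteq> 0) (mset (es @ rs)))"
          unfolding msL' by (simp only: filter_union_mset size_union)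
        have "size (filter_mset (\<lambda>p. fst p i \<noteq> 0) (mset [(v', m - 1)])) \<le> 1" by simp
        then show ?thesis using eq z by linarith
      qed
    qed
    have kr_cs: "(\<Sum>p\<leftarrow>cs. inverse (real r ^ snd p)) = real (length cs) * inverse (\<rho> ^ m)"
      by (rule sum_list_const_on) (use cs_m \<rho>_def in simp)
    have kraft': "(\<Sum>p\<leftarrow>L'. inverse (real r ^ snd p)) \<le> 1"
    proof (cases "r \<le> length ds")
      case True
      then have "length cs = r" unfolding cs_def by simp
      moreover have "\<rho> ^ m = \<rho> * \<rho> ^ (m - 1)" using False by (metis power_eq_if)
      ultimately have "(\<Sum>p\<leftarrow>cs. inverse (real r ^ snd p)) = inverse (real r ^ (m - 1))"
        using kr_cs \<rho>1 unfolding \<rho>_def by (simp add: field_simps)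
      then show ?thesis using less.prems(5) split[of "\<lambda>p. inverse (real r ^ snd p)"]
        split'[of "\<lambda>p. inverse (real r ^ snd p)"] by simp
    next
      case False2: False
      then have es0: "es = []" unfolding es_def by simp
      define R where "R = (\<Sum>p\<leftarrow>rs. inverse (real r ^ snd p))"
      define N where "N = (\<Sum>p\<leftarrow>rs. r ^ (m - 1 - snd p))"
      define P where "P = \<rho> ^ (m - 1)"
      have RN: "R * P = real N"
      proof -
        have "R * P = (\<Sum>p\<leftarrow>rs. inverse (real r ^ snd p) * P)"
          unfolding R_def by (simp add: sum_list_mult_const)
        also have "\<dots> = (\<Sum>p\<leftarrow>rs. real (r ^ (m - 1 - snd p)))"
        proof (rule arg_cong[where f=sum_list], rule map_cong[OF refl])
          fix p assume "p \<in> set rs"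
          then have "snd p \<le> m - 1" using rs_m by fastforce
          then have "P = \<rho> ^ (m - 1 - snd p) * \<rho> ^ snd p"
            unfolding P_def by (metis le_add_diff_inverse2 power_add)
          then show "inverse (real r ^ snd p) * P = real (r ^ (m - 1 - snd p))"
            using \<rho>1 unfolding \<rho>_def by simp
        qed
        also have "\<dots> = real N" unfolding N_def
          by (induction rs) auto
        finally show ?thesis .
      qed
      have mm: "\<rho> ^ m = \<rho> * P" unfolding P_def using False by (metis power_eq_if)
      have "real (length cs) * inverse (\<rho> ^ m) + R \<le> 1"
        using less.prems(5) split[of "\<lambda>p. inverse (real r ^ snd p)"] kr_cs es0
        unfolding R_def by simp
      moreover have "inverse (\<rho> ^ m) \<le> real (length cs) * inverse (\<rho> ^ m)"
        using cs_ne \<rho>1 by (cases cs) auto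
      ultimately have "inverse (\<rho> * P) + R \<le> 1" using mm by simp
      then have "inverse P + R \<le> 1"
        by (rule kraft_step[OF \<rho>1 P_def _ RN, of r]) (simp add: \<rho>_def)
      then show ?thesis using split'[of "\<lambda>p. inverse (real r ^ snd p)"] es0
        unfolding R_def P_def \<rho>_def by simp
    qed
    have "sum_list (map snd cs) = length cs * m"
    proof -
      have "map snd cs = map (\<lambda>_. m) cs" by (rule map_cong) (use cs_m in auto)
      then show ?thesis by (metis sum_list_triv of_nat_id)
    qed
    moreover have "sum_list (map snd L) = sum_list (map snd cs) + sum_list (map snd (es @ rs))"
    proof -
      have "mset (map snd L) = mset (map snd cs) + mset (map snd (es @ rs))" using msL2 by simp
      then show ?thesis by (metis sum_mset_sum_list sum_mset.union)
    qed
    moreover have "sum_list (map snd L') = (m - 1) + sum_list (map snd (es @ rs))"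
      unfolding L'_def by simp
    moreover have "m - 1 < length cs * m"
    proof -
      have "1 \<le> length cs" using cs_ne by (cases cs) auto
      then have "1 * m \<le> length cs * m" by (rule mult_le_mono1)
      then have "m \<le> length cs * m" by simp
      then show ?thesis using False by linarith
    qed
    ultimately have meas: "sum_list (map snd L') < n" using less.prems(1) by simp
    have L'K: "\<forall>p\<in>set L'. fst p \<in> K_M q r"
      unfolding L'_def using v'K less.prems(3) esL rsL by auto
    obtain w where w: "w \<in> K_M q r"
      "ip x w = (\<Sum>p\<leftarrow>L'. real r powr (- real (snd p) / q) * ip x (fst p))"
      using less.IH[OF meas refl _ L'K disj' kraft'] unfolding L'_def by auto
    have val_cs: "(\<Sum>p\<leftarrow>cs. real r powr (- real (snd p) / q) * ip x (fst p))
        = real r powr (- real m / q) * (\<Sum>y\<leftarrow>map fst cs. ip x y)"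
    proof -
      have "(\<Sum>p\<leftarrow>cs. real r powr (- real (snd p) / q) * ip x (fst p))
          = (\<Sum>p\<leftarrow>cs. real r powr (- real m / q) * ip x (fst p))"
        by (rule arg_cong[where f=sum_list], rule map_cong[OF refl]) (use cs_m in simp)
      then show ?thesis by (simp add: sum_list_const_mult o_def)
    qed
    have pw: "real r powr (- real (m - 1) / q) * real r powr (- 1 / q) = real r powr (- real m / q)"
    proof -
      have m1: "real (m - 1) = real m - 1" using False by (simp add: of_nat_diff)
      have eq: "- real (m - 1) / q + - 1 / q = - real m / q"
        unfolding m1 using q0 by (simp add: field_simps)
      have "real r powr (- real (m - 1) / q + - 1 / q) = real r powr (- real (m - 1) / q) * real r powr (- 1 / q)"
        by (rule powr_add)
      then show ?thesis using eq by simp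
    qed
    define A where "A = real r powr (- real (m - 1) / q)"
    define B where "B = real r powr (- 1 / q)"
    define C where "C = real r powr (- real m / q)"
    define S where "S = (\<Sum>y\<leftarrow>map fst cs. ip x y)"
    define T where "T = (\<Sum>p\<leftarrow>es @ rs. real r powr (- real (snd p) / q) * ip x (fst p))"
    have e1: "ip x w = A * ip x v' + T"
      using w(2) split'[of "\<lambda>p. real r powr (- real (snd p) / q) * ip x (fst p)"]
      unfolding A_def T_def by simp
    have e2: "ip x v' = B * S"
      unfolding v'_def B_def S_def by (rule ip_lin)
    have e3: "(\<Sum>p\<leftarrow>L. real r powr (- real (snd p) / q) * ip x (fst p)) = C * S + T"
      using split[of "\<lambda>p. real r powr (- real (snd p) / q) * ip x (fst p)"] val_cs
      unfolding C_def S_def T_def by simp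
    have e4: "A * B = C" using pw unfolding A_def B_def C_def .
    have "ip x w = (\<Sum>p\<leftarrow>L. real r powr (- real (snd p) / q) * ip x (fst p))"
      unfolding e3 e1 e2 e4[symmetric] by (simp only: mult.assoc)
    then show ?thesis using w(1) by blast
  qed
qed

lemma ip_unit:
  assumes "i \<in> supp x" "finite (supp x)"
  shows "ip x (\<lambda>t. sgn (x i) * unit_vec i t) = \<bar>x i\<bar>"
proof -
  have "ip x (\<lambda>t. sgn (x i) * unit_vec i t) = (\<Sum>t\<in>supp x. if t = i then x i * sgn (x i) else 0)"
    unfolding ip_def unit_vec_def by (rule sum.cong) auto
  also have "\<dots> = x i * sgn (x i)" using assms by (simp only: sum.delta if_True)
  also have "\<dots> = \<bar>x i\<bar>" by (cases "x i > 0") (auto simp: sgn_if)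
  finally show ?thesis .
qed

theorem mainTheorem3:
  fixes p q s :: real and r :: nat and x :: "nat \<Rightarrow> real"
  assumes "1 < p" and "1 < q" and "1 / p + 1 / q = 1"
    and "r > 1"
    and "s = real r powr (1 / p)"
    and "x \<in> N_p s p"
  shows "lp_pow p x \<le> pr_norm q r x"
proof -
  define \<rho> where "\<rho> = real r"
  have \<rho>1: "\<rho> > 1" using assms(4) unfolding \<rho>_def by simp
  have q0: "q > 0" and p0: "p > 0" using assms(1,2) by auto
  have r2: "r \<ge> 2" using assms(4) by simp
  have fin: "finite (supp x)" and xC: "\<And>i. x i \<in> C_set s" and lp: "lp_pow p x \<le> 1"
    using assms(6) unfolding N_p_def N_set_def lp_ball_def c00_def by auto
  have s0: "s > 0" using assms(5) \<rho>1 unfolding \<rho>_def by simp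
  let ?A = "{(\<Sum>i\<in>supp x. x i * y i) | y. y \<in> K_M q r}"
  have bdd: "bdd_above ?A"
  proof (rule bdd_aboveI)
    fix z assume "z \<in> ?A"
    then obtain y where y: "y \<in> K_M q r" "z = (\<Sum>i\<in>supp x. x i * y i)" by auto
    have "(\<Sum>i\<in>supp x. x i * y i) \<le> (\<Sum>i\<in>supp x. \<bar>x i\<bar>)"
    proof (rule sum_mono)
      fix i
      have "\<bar>y i\<bar> \<le> 1" by (rule K_bound[OF y(1) q0])
      then have "\<bar>x i\<bar> * \<bar>y i\<bar> \<le> \<bar>x i\<bar>" by (simp add: mult_left_le)
      then show "x i * y i \<le> \<bar>x i\<bar>" by (metis abs_ge_self abs_mult order_trans)
    qed
    then show "z \<le> (\<Sum>i\<in>supp x. \<bar>x i\<bar>)" using y(2) by simp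
  qed
  have suff: "\<exists>w\<in>K_M q r. ip x w = lp_pow p x"
  proof (cases "supp x = {}")
    case True
    then show ?thesis using K_M.unit_pos[of 0 q r] unfolding ip_def lp_pow_def by auto
  next
    case False
    have key: "\<exists>k::nat. \<bar>x i\<bar> = \<rho> powr (- real k / p)" if i: "i \<in> supp x" for i
    proof -
      have xi0: "x i \<noteq> 0" using i unfolding supp_def by simp
      then obtain j :: int where "x i = s powi j \<or> x i = - (s powi j)"
        using xC[of i] unfolding C_set_def by auto
      then have "\<bar>x i\<bar> = s powi j" using s0 by auto
      also have "\<dots> = s powr real_of_int j" using s0 by (simp add: powr_real_of_int')
      also have "\<dots> = \<rho> powr (real_of_int j / p)"
        unfolding assms(5) \<rho>_def by (simp add: powr_powr)
      finally have xa: "\<bar>x i\<bar> = \<rho> powr (real_of_int j / p)" .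
      have "\<bar>x i\<bar> powr p = \<rho> powr (real_of_int j)"
        unfolding xa using p0 by (simp add: powr_powr)
      moreover have "\<bar>x i\<bar> powr p \<le> lp_pow p x"
        unfolding lp_pow_def by (rule member_le_sum) (use i fin in auto)
      ultimately have "\<rho> powr (real_of_int j) \<le> \<rho> powr 0" using lp \<rho>1 by simp
      then have "real_of_int j \<le> 0" using \<rho>1 by (simp only: powr_le_cancel_iff)
      then have "real (nat (- j)) = - real_of_int j" by simp
      then show ?thesis using xa by (metis minus_divide_left minus_minus)
    qed
    then obtain k where k: "\<And>i. i \<in> supp x \<Longrightarrow> \<bar>x i\<bar> = \<rho> powr (- real (k i) / p)"
      by metis
    have kp: "\<bar>x i\<bar> powr p = inverse (\<rho> ^ k i)" if "i \<in> supp x" for i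
    proof -
      have "\<bar>x i\<bar> powr p = \<rho> powr (- real (k i))"
        unfolding k[OF that] using p0 by (simp add: powr_powr)
      also have "\<dots> = inverse (\<rho> ^ k i)" using \<rho>1 by (simp add: powr_minus powr_realpow)
      finally show ?thesis .
    qed
    have kq: "\<rho> powr (- real (k i) / q) * \<bar>x i\<bar> = inverse (\<rho> ^ k i)" if "i \<in> supp x" for i
    proof -
      have e: "- real (k i) / q + - real (k i) / p = - real (k i)"
      proof -
        have "- real (k i) / q + - real (k i) / p = - real (k i) * (1 / p + 1 / q)" by (simp add: field_simps)
        then show ?thesis using assms(3) by simp
      qed
      have "\<rho> powr (- real (k i) / q) * \<bar>x i\<bar> = \<rho> powr (- real (k i) / q + - real (k i) / p)"
        unfolding k[OF that] by (rule powr_add[symmetric])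
      also have "\<dots> = \<rho> powr (- real (k i))" using e by simp
      also have "\<dots> = inverse (\<rho> ^ k i)" using \<rho>1 by (simp add: powr_minus powr_realpow)
      finally show ?thesis .
    qed
    define xs where "xs = sorted_list_of_set (supp x)"
    have xs: "distinct xs" "set xs = supp x" unfolding xs_def using fin by auto
    define L where "L = map (\<lambda>i. ((\<lambda>t. sgn (x i) * unit_vec i t), k i)) xs"
    have Lne: "L \<noteq> []" unfolding L_def using xs(2) False by auto
    have LK: "\<forall>p\<in>set L. fst p \<in> K_M q r"
    proof
      fix pp assume "pp \<in> set L"
      then obtain i where i: "i \<in> supp x" "pp = ((\<lambda>t. sgn (x i) * unit_vec i t), k i)"
        unfolding L_def using xs(2) by auto
      show "fst pp \<in> K_M q r"
      proof (cases "x i > 0")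
        case True
        then have "fst pp = unit_vec i" using i(2) by auto
        then show ?thesis by (simp add: K_M.unit_pos)
      next
        case False
        then have "x i < 0" using i(1) unfolding supp_def by auto
        then have "fst pp = (\<lambda>t. - unit_vec i t)" using i(2) by auto
        then show ?thesis by (simp add: K_M.unit_neg)
      qed
    qed
    have Ldisj: "\<forall>t. size (filter_mset (\<lambda>p. fst p t \<noteq> 0) (mset L)) \<le> 1"
    proof
      fix t
      have "size (filter_mset (\<lambda>p. fst p t \<noteq> 0) (mset L)) = length (filter (\<lambda>p. fst p t \<noteq> 0) L)"
        by (metis mset_filter size_mset)
      also have "\<dots> = length (filter (\<lambda>i. sgn (x i) * unit_vec i t \<noteq> 0) xs)"
        unfolding L_def by (simp add: filter_map o_def)
      also have "\<dots> = card ({i. sgn (x i) * unit_vec i t \<noteq> 0} \<inter> set xs)"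
        using xs(1) by (rule distinct_length_filter)
      also have "\<dots> \<le> card {t}"
        by (rule card_mono) (auto simp: unit_vec_def split: if_splits)
      finally show "size (filter_mset (\<lambda>p. fst p t \<noteq> 0) (mset L)) \<le> 1" by simp
    qed
    have Lkr: "(\<Sum>p\<leftarrow>L. inverse (real r ^ snd p)) = lp_pow p x"
    proof -
      have "(\<Sum>p\<leftarrow>L. inverse (real r ^ snd p)) = (\<Sum>i\<leftarrow>xs. inverse (\<rho> ^ k i))"
        unfolding L_def \<rho>_def by (simp add: o_def)
      also have "\<dots> = (\<Sum>i\<in>supp x. inverse (\<rho> ^ k i))"
        using xs by (simp add: sum_list_distinct_conv_sum_set)
      also have "\<dots> = (\<Sum>i\<in>supp x. \<bar>x i\<bar> powr p)"
        by (rule sum.cong) (simp_all add: kp)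
      finally show ?thesis unfolding lp_pow_def .
    qed
    obtain w where w: "w \<in> K_M q r"
      "ip x w = (\<Sum>p\<leftarrow>L. real r powr (- real (snd p) / q) * ip x (fst p))"
      using merge[OF r2 q0 refl Lne LK Ldisj] Lkr lp by auto
    have "(\<Sum>p\<leftarrow>L. real r powr (- real (snd p) / q) * ip x (fst p))
        = (\<Sum>i\<leftarrow>xs. \<rho> powr (- real (k i) / q) * ip x (\<lambda>t. sgn (x i) * unit_vec i t))"
      unfolding L_def \<rho>_def by (simp add: o_def)
    also have "\<dots> = (\<Sum>i\<in>supp x. \<rho> powr (- real (k i) / q) * ip x (\<lambda>t. sgn (x i) * unit_vec i t))"
      using xs by (simp add: sum_list_distinct_conv_sum_set)
    also have "\<dots> = (\<Sum>i\<in>supp x. inverse (\<rho> ^ k i))"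
    proof (rule sum.cong)
      fix i assume i: "i \<in> supp x"
      show "\<rho> powr (- real (k i) / q) * ip x (\<lambda>t. sgn (x i) * unit_vec i t) = inverse (\<rho> ^ k i)"
        by (simp only: ip_unit[OF i fin] kq[OF i])
    qed simp
    also have "\<dots> = lp_pow p x"
      unfolding lp_pow_def by (rule sum.cong) (simp_all add: kp)
    finally show ?thesis using w by auto
  qed
  then obtain w where w: "w \<in> K_M q r" "ip x w = lp_pow p x" by blast
  have "lp_pow p x \<in> ?A" using w unfolding ip_def by (metis (mono_tags, lifting) mem_Collect_eq)
  then show ?thesis unfolding pr_norm_def using bdd by (rule cSup_upper)
qed

end
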